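(* Assume (H1), (H2) and (H3) from the context hold. Then the set $\mathcal{T}(\mathcal{A})$ is relatively compact in $\mathcal{E}_\varrho$.
   Context: Let $N\ge1$ and $D=\mathrm{diag}(d_1,\dots,d_N)$ with $d_i>0$. Vector inequalities are componentwise; $u\gg0$ means all components positive; $[0,r]=\{u:0\le u\le r\}$; $\mathcal{C}_r$ is the set of continuous $\mathbb{R}\to[0,r]$ maps. (H1) - $k^+\gg0$; $f:[0,k^+]\to\mathbb{R}^N$ is continuous and piecewise twice continuously differentiable; solutions of $u_t=Du_{xx}+f(u)$ with data in $\mathcal{C}_{k^+}$ exist globally in $\mathcal{C}_{k^+}$. - $0\ll k^-\le k\le k^+$; continuous piecewise $C^2$ maps $f^\pm:[0,k^\pm]\to\mathbb{R}^N$ satisfy $f^-\le f\le f^+$ on $[0,k^+]$. - $f(0)=f(k)=0$, $f^\pm(0)=f^\pm(k^\pm)=0$, with no other positive equilibria between $0$ and $k$, respectively $k^\pm$. - $f^\pm$ are cooperative on $[0,k^\pm]$ and share with $f$ the Jacobian $f'(0)$ at $0$. (H2) - $A_\lambda=\mathrm{diag}(d_i\lambda^2)+f'(0)$ is block lower triangular for $\lambda>0$, with irreducible or $1\times1$ zero diagonal blocks. - Its first block has positive principal eigenvalue $\Psi(A_\lambda)$ (where $\Psi(A)=\rho(A+\alpha I)-\alpha$), strictly larger than those of the other blocks. - An eigenvector $\nu_\lambda=(\nu^i_\lambda)\gg0$ for $\Psi(A_\lambda)$ exists and is continuous in $\lambda$. Speeds. $\Phi(\lambda)=\Psi(A_\lambda)/\lambda$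 and $c^*=\inf_{\lambda>0}\Phi$. (H3) $f^\pm(\alpha\nu_\lambda)\le\alpha f'(0)\nu_\lambda$ for all $\alpha,\lambda>0$. Setup. Fix $c>c^*$, and let $\Lambda_c$ be the smallest positive solution of $\Phi(\lambda)=c$. The operator $\mathcal{T}$. $\beta>\max\{|\partial_if_j(u)|:u\in[0,k^+]\}$ is a fixed, sufficiently large constant. Set $\lambda_{1i}=\frac{-c+\sqrt{c^2+4\beta d_i}}{2d_i}$ and $\lambda_{2i}=\frac{c+\sqrt{c^2+4\beta d_i}}{2d_i}$, with $\lambda_{2i}>\lambda_{1i}>2\Lambda_c$. Let $H_i(u)=\beta u_i+f_i(u)$ and $$\mathcal{T}_i[u](\xi)=\frac{1}{d_i(\lambda_{1i}+\lambda_{2i})}\Big(\int_{-\infty}^{\xi}e^{-\lambda_{1i}(\xi-s)}H_i(u(s))ds+\int_{\xi}^{\infty}e^{\lambda_{2i}(\xi-s)}H_i(u(s))ds\Big).$$ The functions $\phi^\pm$. $\phi^+_i(\xi)=\min\{k_i,\nu^i_{\Lambda_c}e^{\Lambda_c\xi}\}$ and $\phi^-_i(\xi)=\max\{0,\nu^i_{\Lambda_c}e^{\Lambda_c\xi}-q\nu^i_{\gamma\Lambda_c}e^{\gamma\Lambda_c\xi}\}$, with fixed $\gamma\in(1,2)$ and $q>1$ large enough that $\phi^-<\phi^+$. The space $\mathcal{A}$. Fix $0<\varrho<\Lambda_c$. $\mathcal{E}_\varrho$ is the Banach space of continuous $u:\mathbb{R}\to\mathbb{R}^N$ with $\|u\|_\varrho=\sum_i\sup_\xi|u_i(\xi)|e^{-\varrho\xi}<\infty$,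 and $\mathcal{A}=\{u\in\mathcal{E}_\varrho:\phi^-\le u\le\phi^+\}$. *)

theory Defs
  imports "HOL-Analysis.Analysis"
begin

text \<open>Vectors of R^N are modelled as real^'n with 'n a finite linearly ordered index type
  (the order is the index order 1..N, needed for block lower triangularity).
  Matrices are real^'n^'n, A$i$j = entry in row i, column j.\<close>

definition C2_on :: "(real^'n::finite) set \<Rightarrow> (real^'n \<Rightarrow> real^'n) \<Rightarrow> bool" where
  "C2_on U g \<longleftrightarrow> (\<exists>g1 g2.
     (\<forall>x\<in>U. (g has_derivative blinfun_apply (g1 x)) (at x)) \<and>
     (\<forall>x\<in>U. (g1 has_derivative blinfun_apply (g2 x)) (at x)) \<and>
     continuous_on U g2)"

definition pw_C2_on :: "(real^'n::finite) set \<Rightarrow> (real^'n \<Rightarrow> real^'n) \<Rightarrow> bool" where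
  "pw_C2_on K f \<longleftrightarrow> continuous_on K f \<and>
     (\<exists>P. finite P \<and> \<Union>P = K \<and>
        (\<forall>S\<in>P. closed S \<and> closure (interior S) = S \<and>
           (\<exists>U g. open U \<and> S \<subseteq> U \<and> (\<forall>u\<in>S. g u = f u) \<and> C2_on U g)))"

text \<open>A local C^1 representation of f on a "fat" closed subset S of K; g1 u is then the
  (continuous) Jacobian of f at u on S, so this is how the partial derivatives of a piecewise
  smooth f are accessed (on every piece, including its boundary).\<close>
definition C1_rep :: "(real^'n::finite) set \<Rightarrow> (real^'n \<Rightarrow> real^'n) \<Rightarrow> (real^'n) set
    \<Rightarrow> (real^'n \<Rightarrow> ((real^'n) \<Rightarrow>\<^sub>L (real^'n))) \<Rightarrow> bool" where
  "C1_rep K f S g1 \<longleftrightarrow> S \<subseteq> K \<and> closed S \<and> closure (interior S) = S \<and>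
     (\<exists>U g. open U \<and> S \<subseteq> U \<and> (\<forall>u\<in>S. g u = f u) \<and>
        (\<forall>x\<in>U. (g has_derivative blinfun_apply (g1 x)) (at x)) \<and> continuous_on U g1)"

text \<open>partial derivative \<partial>_i f_j (derivative of component j with respect to u_i)\<close>
definition pd :: "(real^'n::finite \<Rightarrow> ((real^'n) \<Rightarrow>\<^sub>L (real^'n))) \<Rightarrow> real^'n \<Rightarrow> 'n \<Rightarrow> 'n \<Rightarrow> real" where
  "pd g1 u i j = blinfun_apply (g1 u) (axis i 1) $ j"

definition cooperative_on :: "(real^'n::finite) set \<Rightarrow> (real^'n \<Rightarrow> real^'n) \<Rightarrow> bool" where
  "cooperative_on K f \<longleftrightarrow>
     (\<forall>S g1. C1_rep K f S g1 \<longrightarrow> (\<forall>u\<in>S. \<forall>i j. i \<noteq> j \<longrightarrow> pd g1 u i j \<ge> 0))"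

definition deriv_bound_on :: "(real^'n::finite) set \<Rightarrow> (real^'n \<Rightarrow> real^'n) \<Rightarrow> real \<Rightarrow> bool" where
  "deriv_bound_on K f \<beta> \<longleftrightarrow>
     (\<forall>S g1. C1_rep K f S g1 \<longrightarrow> (\<forall>u\<in>S. \<forall>i j. \<bar>pd g1 u i j\<bar> < \<beta>))"

definition global_existence :: "real^'n::finite \<Rightarrow> real^'n \<Rightarrow> (real^'n \<Rightarrow> real^'n) \<Rightarrow> bool" where
  "global_existence d kp f \<longleftrightarrow>
    (\<forall>u0 :: real \<Rightarrow> real^'n. continuous_on UNIV u0 \<and> (\<forall>x. u0 x \<in> {0..kp}) \<longrightarrow>
      (\<exists>u :: real \<Rightarrow> real \<Rightarrow> real^'n.
         (\<forall>x. u 0 x = u0 x) \<and>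
         continuous_on ({0..} \<times> UNIV) (\<lambda>(t,x). u t x) \<and>
         (\<forall>t\<ge>0. \<forall>x. u t x \<in> {0..kp}) \<and>
         (\<exists>ut ux uxx. \<forall>t>0. \<forall>x.
            ((\<lambda>s. u s x) has_vector_derivative ut t x) (at t) \<and>
            (u t has_vector_derivative ux t x) (at x) \<and>
            (ux t has_vector_derivative uxx t x) (at x) \<and>
            ut t x = (\<chi> i. d $ i * uxx t x $ i) + f (u t x))))"

definition eig_on :: "'n::finite set \<Rightarrow> real^'n^'n \<Rightarrow> complex \<Rightarrow> bool" where
  "eig_on S A z \<longleftrightarrow> (\<exists>v :: complex^'n. v \<noteq> 0 \<and> (\<forall>i. i \<notin> S \<longrightarrow> v $ i = 0) \<and>
      (\<forall>i\<in>S. (\<Sum>j\<in>S. complex_of_real (A $ i $ j) * v $ j) = z * v $ i))"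

definition specrad_on :: "'n::finite set \<Rightarrow> real^'n^'n \<Rightarrow> real" where
  "specrad_on S A = Max {cmod z | z. eig_on S A z}"

text \<open>\<Psi>(A) = \<rho>(A + \<alpha>I) - \<alpha>, with \<alpha> chosen so that the diagonal of A + \<alpha>I is nonnegative\<close>
definition Psi_on :: "'n::finite set \<Rightarrow> real^'n^'n \<Rightarrow> real" where
  "Psi_on S A = (let \<alpha> = Max ((\<lambda>i. \<bar>A $ i $ i\<bar>) ` S) in specrad_on S (A + mat \<alpha>) - \<alpha>)"

abbreviation Psi :: "real^'n^'n \<Rightarrow> real" where "Psi A \<equiv> Psi_on (UNIV :: 'n::finite set) A"

text \<open>irreducibility of the principal submatrix on S (a 1x1 matrix is irreducible iff nonzero)\<close>
definition irreducible_on :: "'n::finite set \<Rightarrow> real^'n^'n \<Rightarrow> bool" where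
  "irreducible_on S A \<longleftrightarrow>
     (card S = 1 \<longrightarrow> (\<forall>i\<in>S. A $ i $ i \<noteq> 0)) \<and>
     (card S \<ge> 2 \<longrightarrow> (\<forall>i\<in>S. \<forall>j\<in>S. i \<noteq> j \<longrightarrow>
        (i, j) \<in> {(a, b). a \<in> S \<and> b \<in> S \<and> a \<noteq> b \<and> A $ a $ b \<noteq> 0}\<^sup>+))"

definition Amat :: "real^'n::finite \<Rightarrow> real^'n^'n \<Rightarrow> real \<Rightarrow> real^'n^'n" where
  "Amat d J l = (\<chi> i j. if i = j then d $ i * l\<^sup>2 else 0) + J"

text \<open>(H2) block part, for a single matrix: block lower triangular w.r.t. the index order, with
  consecutive diagonal blocks blk^-1{b}; each diagonal block irreducible or a 1x1 zero block;
  the first block has positive principal eigenvalue strictly larger than those of the others.\<close>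
definition H2_blocks :: "real^('n::{finite,linorder})^('n::{finite,linorder}) \<Rightarrow> bool" where
  "H2_blocks A \<longleftrightarrow> (\<exists>blk :: 'n \<Rightarrow> nat. mono blk \<and>
      (\<forall>i j. blk i < blk j \<longrightarrow> A $ i $ j = 0) \<and>
      (\<forall>b\<in>range blk. irreducible_on (blk -` {b}) A \<or>
          (card (blk -` {b}) = 1 \<and> (\<forall>i\<in>blk -` {b}. A $ i $ i = 0))) \<and>
      Psi_on (blk -` {Min (range blk)}) A > 0 \<and>
      (\<forall>b\<in>range blk. b \<noteq> Min (range blk) \<longrightarrow>
          Psi_on (blk -` {b}) A < Psi_on (blk -` {Min (range blk)}) A))"

definition Phi :: "real^'n::finite \<Rightarrow> real^'n^'n \<Rightarrow> real \<Rightarrow> real" where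
  "Phi d J l = Psi (Amat d J l) / l"

definition cstar :: "real^'n::finite \<Rightarrow> real^'n^'n \<Rightarrow> real" where
  "cstar d J = Inf (Phi d J ` {0<..})"

definition lam1 :: "real^'n::finite \<Rightarrow> real \<Rightarrow> real \<Rightarrow> 'n \<Rightarrow> real" where
  "lam1 d \<beta> c i = (- c + sqrt (c\<^sup>2 + 4 * \<beta> * d $ i)) / (2 * d $ i)"

definition lam2 :: "real^'n::finite \<Rightarrow> real \<Rightarrow> real \<Rightarrow> 'n \<Rightarrow> real" where
  "lam2 d \<beta> c i = (c + sqrt (c\<^sup>2 + 4 * \<beta> * d $ i)) / (2 * d $ i)"

definition Top :: "real^'n::finite \<Rightarrow> real \<Rightarrow> real \<Rightarrow> (real^'n \<Rightarrow> real^'n)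
    \<Rightarrow> (real \<Rightarrow> real^'n) \<Rightarrow> real \<Rightarrow> real^'n" where
  "Top d \<beta> c f u \<xi> = (\<chi> i. 1 / (d $ i * (lam1 d \<beta> c i + lam2 d \<beta> c i)) *
      ((LBINT s:{..\<xi>}. exp (- lam1 d \<beta> c i * (\<xi> - s)) * (\<beta> * u s $ i + f (u s) $ i)) +
       (LBINT s:{\<xi>..}. exp (lam2 d \<beta> c i * (\<xi> - s)) * (\<beta> * u s $ i + f (u s) $ i))))"

definition phip :: "real^'n::finite \<Rightarrow> (real \<Rightarrow> real^'n) \<Rightarrow> real \<Rightarrow> real \<Rightarrow> real^'n" where
  "phip k \<nu> \<Lambda> \<xi> = (\<chi> i. min (k $ i) (\<nu> \<Lambda> $ i * exp (\<Lambda> * \<xi>)))"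

definition phim :: "(real \<Rightarrow> real^'n::finite) \<Rightarrow> real \<Rightarrow> real \<Rightarrow> real \<Rightarrow> real \<Rightarrow> real^'n" where
  "phim \<nu> \<Lambda> \<gamma> q \<xi> = (\<chi> i. max 0 (\<nu> \<Lambda> $ i * exp (\<Lambda> * \<xi>)
                                   - q * \<nu> (\<gamma> * \<Lambda>) $ i * exp (\<gamma> * \<Lambda> * \<xi>)))"

definition Espace :: "real \<Rightarrow> (real \<Rightarrow> real^'n::finite) set" where
  "Espace \<rho> = {u. continuous_on UNIV u \<and>
                  (\<forall>i. bdd_above (range (\<lambda>\<xi>. \<bar>u \<xi> $ i\<bar> * exp (- \<rho> * \<xi>))))}"

definition wnorm :: "real \<Rightarrow> (real \<Rightarrow> real^'n::finite) \<Rightarrow> real" where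
  "wnorm \<rho> u = (\<Sum>i\<in>UNIV. (SUP \<xi>. \<bar>u \<xi> $ i\<bar> * exp (- \<rho> * \<xi>)))"

text \<open>relative compactness in the (Banach) space E_\<rho>: every sequence in S has a subsequence
  converging in \<parallel>.\<parallel>_\<rho> to an element of E_\<rho>\<close>
definition rel_compact_E :: "real \<Rightarrow> (real \<Rightarrow> real^'n::finite) set \<Rightarrow> bool" where
  "rel_compact_E \<rho> S \<longleftrightarrow> S \<subseteq> Espace \<rho> \<and>
     (\<forall>x :: nat \<Rightarrow> real \<Rightarrow> real^'n. (\<forall>n. x n \<in> S) \<longrightarrow>
        (\<exists>r v. strict_mono r \<and> v \<in> Espace \<rho> \<and>
               (\<lambda>n. wnorm \<rho> (\<lambda>\<xi>. x (r n) \<xi> - v \<xi>)) \<longlonglongrightarrow> 0))"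

end

theory Submission imports Defs "HOL-Complex_Analysis.Great_Picard" "HOL-Real_Asymp.Real_Asymp" begin

lemma kerL:
  fixes a \<xi> :: real assumes a: "a > 0"
  shows "set_integrable lborel {..\<xi>} (\<lambda>s. exp (- a * (\<xi> - s)))"
    "(LBINT s:{..\<xi>}. exp (- a * (\<xi> - s))) = 1 / a"
proof -
  let ?f = "\<lambda>s. exp (- a * (\<xi> - s))"
  let ?F = "\<lambda>s. exp (- a * (\<xi> - s)) / a"
  have D: "DERIV ?F x :> ?f x" for x
    using a by (auto intro!: derivative_eq_intros simp: field_simps)
  have A: "((?F \<circ> real_of_ereal) \<longlongrightarrow> 0) (at_right (-\<infinity>))"
    unfolding ereal_tendsto_simps using a by real_asymp
  have B: "((?F \<circ> real_of_ereal) \<longlongrightarrow> 1/a) (at_left (ereal \<xi>))"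
  proof -
    have "(?F \<longlongrightarrow> ?F \<xi>) (at_left \<xi>)"
      using assms by (intro tendsto_intros) auto
    then show ?thesis unfolding ereal_tendsto_simps by simp
  qed
  have I: "set_integrable lborel (einterval (-\<infinity>) (ereal \<xi>)) ?f"
    "(LBINT x=-\<infinity>..ereal \<xi>. ?f x) = 1/a - 0"
    by (rule interval_integral_FTC_nonneg[OF _ D _ _ A B]; auto)+
  have e: "einterval (-\<infinity>) (ereal \<xi>) = {..<\<xi>}"
    by (auto simp: einterval_def)
  have dd: "set_integrable lborel {..<\<xi>} ?f \<longleftrightarrow> set_integrable lborel {..\<xi>} ?f"
    by (rule set_integrable_discrete_difference[where X="{\<xi>}"]) auto
  show "set_integrable lborel {..\<xi>} ?f" using I(1) e dd by simp
  have "(LBINT s:{..<\<xi>}. ?f s) = (LBINT s:{..\<xi>}. ?f s)"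
    by (rule set_integral_discrete_difference[where X="{\<xi>}"]) auto
  then show "(LBINT s:{..\<xi>}. ?f s) = 1 / a"
    using I(2) e by (simp add: interval_lebesgue_integral_def)
qed

lemma kerR:
  fixes b \<xi> :: real assumes b: "b > 0"
  shows "set_integrable lborel {\<xi>..} (\<lambda>s. exp (b * (\<xi> - s)))"
    "(LBINT s:{\<xi>..}. exp (b * (\<xi> - s))) = 1 / b"
proof -
  let ?f = "\<lambda>s. exp (b * (\<xi> - s))"
  let ?F = "\<lambda>s. - exp (b * (\<xi> - s)) / b"
  have D: "DERIV ?F x :> ?f x" for x
    using b by (auto intro!: derivative_eq_intros simp: field_simps)
  have B: "((?F \<circ> real_of_ereal) \<longlongrightarrow> 0) (at_left \<infinity>)"
    unfolding ereal_tendsto_simps using b by real_asymp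
  have A: "((?F \<circ> real_of_ereal) \<longlongrightarrow> -1/b) (at_right (ereal \<xi>))"
  proof -
    have "(?F \<longlongrightarrow> ?F \<xi>) (at_right \<xi>)"
      using assms by (intro tendsto_intros) auto
    then show ?thesis unfolding ereal_tendsto_simps by simp
  qed
  have I: "set_integrable lborel (einterval (ereal \<xi>) \<infinity>) ?f"
    "(LBINT x=ereal \<xi>..\<infinity>. ?f x) = 0 - -1/b"
    by (rule interval_integral_FTC_nonneg[OF _ D _ _ A B]; auto)+
  have e: "einterval (ereal \<xi>) \<infinity> = {\<xi><..}"
    by (auto simp: einterval_def)
  have dd: "set_integrable lborel {\<xi><..} ?f \<longleftrightarrow> set_integrable lborel {\<xi>..} ?f"
    by (rule set_integrable_discrete_difference[where X="{\<xi>}"]) auto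
  show "set_integrable lborel {\<xi>..} ?f" using I(1) e dd by simp
  have "(LBINT s:{\<xi><..}. ?f s) = (LBINT s:{\<xi>..}. ?f s)"
    by (rule set_integral_discrete_difference[where X="{\<xi>}"]) auto
  then show "(LBINT s:{\<xi>..}. ?f s) = 1 / b"
    using I(2) e by (simp add: interval_lebesgue_integral_def)
qed

lemma meas_sbm:
  fixes h :: "real \<Rightarrow> real"
  assumes "continuous_on UNIV h" and [measurable]: "A \<in> sets borel"
  shows "set_borel_measurable lborel A h"
proof -
  have [measurable]: "h \<in> borel_measurable borel"
    by (rule borel_measurable_continuous_onI) fact
  show ?thesis unfolding set_borel_measurable_def by simp
qed

lemma const_int:
  fixes \<xi> \<eta> M :: real assumes "\<xi> \<le> \<eta>"
  shows "set_integrable lborel {\<xi><..\<eta>} (\<lambda>s. M)" "(LBINT s:{\<xi><..\<eta>}. M) = M * (\<eta> - \<xi>)"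
    "set_integrable lborel {\<xi>..<\<eta>} (\<lambda>s. M)" "(LBINT s:{\<xi>..<\<eta>}. M) = M * (\<eta> - \<xi>)"
proof -
  have I: "set_integrable lborel {\<xi>..\<eta>} (\<lambda>s. M)"
    by (rule borel_integrable_atLeastAtMost') simp
  show "set_integrable lborel {\<xi><..\<eta>} (\<lambda>s. M)" "set_integrable lborel {\<xi>..<\<eta>} (\<lambda>s. M)"
    by (rule set_integrable_subset[OF I]; auto)+
  show "(LBINT s:{\<xi><..\<eta>}. M) = M * (\<eta> - \<xi>)" "(LBINT s:{\<xi>..<\<eta>}. M) = M * (\<eta> - \<xi>)"
    using assms by (subst set_integral_const; simp)+
qed

lemma Lest:
  fixes h :: "real \<Rightarrow> real" and a M C \<Lambda> \<xi> \<eta> :: real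
  assumes a: "a > 0" and hc: "continuous_on UNIV h" and hM: "\<And>s. \<bar>h s\<bar> \<le> M"
    and hC: "\<And>s. \<bar>h s\<bar> \<le> C * exp (\<Lambda> * s)" and \<Lambda>: "\<Lambda> \<ge> 0"
  shows "set_integrable lborel {..\<xi>} (\<lambda>s. exp (- a * (\<xi> - s)) * h s)"
    "\<bar>LBINT s:{..\<xi>}. exp (- a * (\<xi> - s)) * h s\<bar> \<le> M / a"
    "\<bar>LBINT s:{..\<xi>}. exp (- a * (\<xi> - s)) * h s\<bar> \<le> C * exp (\<Lambda> * \<xi>) / (a + \<Lambda>)"
    "\<xi> \<le> \<eta> \<Longrightarrow> \<bar>(LBINT s:{..\<eta>}. exp (- a * (\<eta> - s)) * h s) - (LBINT s:{..\<xi>}. exp (- a * (\<xi> - s)) * h s)\<bar> \<le> 2 * M * (\<eta> - \<xi>)"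
proof -
  define L where "L = (\<lambda>\<xi>. LBINT s:{..\<xi>}. exp (- a * (\<xi> - s)) * h s)"
  have M0: "M \<ge> 0" using hM[of 0] by linarith
  have ptw: "\<bar>exp (- a * (\<xi> - s)) * h s\<bar> \<le> M * exp (- a * (\<xi> - s))" for \<xi> s
  proof -
    have "\<bar>exp (- a * (\<xi> - s)) * h s\<bar> = exp (- a * (\<xi> - s)) * \<bar>h s\<bar>" by (simp add: abs_mult)
    also have "\<dots> \<le> exp (- a * (\<xi> - s)) * M" by (rule mult_left_mono[OF hM]) simp
    finally show ?thesis by (simp add: mult.commute)
  qed
  have int: "set_integrable lborel {..\<xi>} (\<lambda>s. exp (- a * (\<xi> - s)) * h s)" for \<xi>
  proof (rule set_integrable_bound[where f="\<lambda>s. M * exp (- a * (\<xi> - s))"])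
    show "set_integrable lborel {..\<xi>} (\<lambda>s. M * exp (- a * (\<xi> - s)))"
      using kerL(1)[OF a] by simp
    show "set_borel_measurable lborel {..\<xi>} (\<lambda>s. exp (- a * (\<xi> - s)) * h s)"
      by (rule meas_sbm) (auto intro!: continuous_intros hc)
    show "AE x in lborel. x \<in> {..\<xi>} \<longrightarrow> norm (exp (- a * (\<xi> - x)) * h x) \<le> norm (M * exp (- a * (\<xi> - x)))"
      using ptw M0 by (simp add: abs_mult)
  qed
  show "set_integrable lborel {..\<xi>} (\<lambda>s. exp (- a * (\<xi> - s)) * h s)" by (rule int)
  have bnd: "\<bar>LBINT s:S. g s\<bar> \<le> (LBINT s:S. B s)" if i1: "set_integrable lborel S g" and i2: "set_integrable lborel S B"
    and i3: "\<And>s. s \<in> S \<Longrightarrow> \<bar>g s\<bar> \<le> B s" for S :: "real set" and g B :: "real \<Rightarrow> real"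
  proof -
    have "(LBINT s:S. g s) \<le> (LBINT s:S. B s)"
      by (rule set_integral_mono[OF i1 i2]) (use i3 in \<open>force\<close>)
    moreover have pw: "- B s \<le> g s" if "s \<in> S" for s using i3[OF that] by linarith
    have "(LBINT s:S. - B s) \<le> (LBINT s:S. g s)"
      by (rule set_integral_mono[OF _ i1]) (use i2 pw in \<open>auto simp: set_integrable_def\<close>)
    moreover have "(LBINT s:S. - B s) = - (LBINT s:S. B s)"
      by (rule set_integral_uminus[OF i2])
    ultimately show ?thesis by linarith
  qed
  have bM: "\<bar>L \<xi>\<bar> \<le> M / a" for \<xi>
  proof -
    have "\<bar>L \<xi>\<bar> \<le> (LBINT s:{..\<xi>}. M * exp (- a * (\<xi> - s)))" unfolding L_def
      by (rule bnd[OF int]) (use kerL(1)[OF a] ptw in auto)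
    also have "\<dots> = M / a" using kerL(2)[OF a, of \<xi>] by simp
    finally show ?thesis .
  qed
  then show "\<bar>LBINT s:{..\<xi>}. exp (- a * (\<xi> - s)) * h s\<bar> \<le> M / a" unfolding L_def .
  have aL: "a + \<Lambda> > 0" using a \<Lambda> by simp
  have eqe: "exp (- a * (\<xi> - s)) * (C * exp (\<Lambda> * s)) = C * exp (\<Lambda> * \<xi>) * exp (- (a + \<Lambda>) * (\<xi> - s))" for s
  proof -
    have "exp (- a * (\<xi> - s)) * exp (\<Lambda> * s) = exp (\<Lambda> * \<xi>) * exp (- (a + \<Lambda>) * (\<xi> - s))"
      by (simp add: exp_add[symmetric] algebra_simps)
    then show ?thesis by (metis mult.left_commute mult.assoc)
  qed
  have "\<bar>L \<xi>\<bar> \<le> (LBINT s:{..\<xi>}. C * exp (\<Lambda> * \<xi>) * exp (- (a + \<Lambda>) * (\<xi> - s)))" unfolding L_def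
  proof (rule bnd[OF int])
    show "set_integrable lborel {..\<xi>} (\<lambda>s. C * exp (\<Lambda> * \<xi>) * exp (- (a + \<Lambda>) * (\<xi> - s)))"
      using kerL(1)[OF aL] by simp
    fix s
    have "\<bar>exp (- a * (\<xi> - s)) * h s\<bar> = exp (- a * (\<xi> - s)) * \<bar>h s\<bar>" by (simp add: abs_mult)
    also have "\<dots> \<le> exp (- a * (\<xi> - s)) * (C * exp (\<Lambda> * s))" by (rule mult_left_mono[OF hC]) simp
    finally show "\<bar>exp (- a * (\<xi> - s)) * h s\<bar> \<le> C * exp (\<Lambda> * \<xi>) * exp (- (a + \<Lambda>) * (\<xi> - s))"
      by (simp only: eqe)
  qed
  also have "\<dots> = C * exp (\<Lambda> * \<xi>) / (a + \<Lambda>)" using kerL(2)[OF aL, of \<xi>] by simp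
  finally show "\<bar>LBINT s:{..\<xi>}. exp (- a * (\<xi> - s)) * h s\<bar> \<le> C * exp (\<Lambda> * \<xi>) / (a + \<Lambda>)"
    unfolding L_def .
  assume le: "\<xi> \<le> \<eta>"
  let ?g = "\<lambda>s. exp (- a * (\<eta> - s)) * h s"
  have un: "{..\<eta>} = {..\<xi>} \<union> {\<xi><..\<eta>}" using le by auto
  have i1: "set_integrable lborel {..\<xi>} ?g" by (rule set_integrable_subset[OF int]) (use le in auto)
  have i2: "set_integrable lborel {\<xi><..\<eta>} ?g" by (rule set_integrable_subset[OF int]) auto
  have Ls: "L \<eta> = (LBINT s:{..\<xi>}. ?g s) + (LBINT s:{\<xi><..\<eta>}. ?g s)"
    unfolding L_def un by (rule set_integral_Un[OF _ i1 i2]) auto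
  have ge: "?g = (\<lambda>s. exp (- a * (\<eta> - \<xi>)) * (exp (- a * (\<xi> - s)) * h s))"
    by (simp add: fun_eq_iff exp_add[symmetric] algebra_simps)
  have P1: "(LBINT s:{..\<xi>}. ?g s) = exp (- a * (\<eta> - \<xi>)) * L \<xi>"
    unfolding L_def by (subst ge) simp
  have P2: "\<bar>LBINT s:{\<xi><..\<eta>}. ?g s\<bar> \<le> M * (\<eta> - \<xi>)"
  proof -
    have "\<bar>LBINT s:{\<xi><..\<eta>}. ?g s\<bar> \<le> (LBINT s:{\<xi><..\<eta>}. M)"
    proof (rule bnd[OF i2 const_int(1)[OF le]])
      fix s assume "s \<in> {\<xi><..\<eta>}"
      then have "exp (- a * (\<eta> - s)) \<le> 1" using a by (simp add: mult_nonneg_nonneg)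
      then have "M * exp (- a * (\<eta> - s)) \<le> M" using M0 by (simp add: mult_left_le)
      then show "\<bar>?g s\<bar> \<le> M" using ptw[of \<eta> s] by linarith
    qed
    then show ?thesis using const_int(2)[OF le] by simp
  qed
  define E where "E = exp (- a * (\<eta> - \<xi>))"
  have E1: "E \<le> 1" unfolding E_def using a le by (simp add: mult_nonneg_nonneg)
  have E2: "1 - E \<le> a * (\<eta> - \<xi>)" unfolding E_def using exp_ge_add_one_self[of "- a * (\<eta> - \<xi>)"] by simp
  have "\<bar>(E - 1) * L \<xi>\<bar> = (1 - E) * \<bar>L \<xi>\<bar>" using E1 by (simp add: abs_mult)
  also have "\<dots> \<le> (a * (\<eta> - \<xi>)) * (M / a)"
    by (rule mult_mono[OF E2 bM]) (use E1 a le in auto)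
  also have "\<dots> = M * (\<eta> - \<xi>)" using a by simp
  finally have P3: "\<bar>(E - 1) * L \<xi>\<bar> \<le> M * (\<eta> - \<xi>)" .
  have "L \<eta> - L \<xi> = (E - 1) * L \<xi> + (LBINT s:{\<xi><..\<eta>}. ?g s)"
    using Ls P1 unfolding E_def by (simp add: algebra_simps)
  then show "\<bar>(LBINT s:{..\<eta>}. exp (- a * (\<eta> - s)) * h s) - (LBINT s:{..\<xi>}. exp (- a * (\<xi> - s)) * h s)\<bar> \<le> 2 * M * (\<eta> - \<xi>)"
    using P2 P3 unfolding L_def by linarith
qed
lemma Rest:
  fixes h :: "real \<Rightarrow> real" and b M C \<Lambda> \<xi> \<eta> :: real
  assumes b: "b > \<Lambda>" and hc: "continuous_on UNIV h" and hM: "\<And>s. \<bar>h s\<bar> \<le> M"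
    and hC: "\<And>s. \<bar>h s\<bar> \<le> C * exp (\<Lambda> * s)" and \<Lambda>: "\<Lambda> \<ge> 0"
  shows "set_integrable lborel {\<xi>..} (\<lambda>s. exp (b * (\<xi> - s)) * h s)"
    "\<bar>LBINT s:{\<xi>..}. exp (b * (\<xi> - s)) * h s\<bar> \<le> M / b"
    "\<bar>LBINT s:{\<xi>..}. exp (b * (\<xi> - s)) * h s\<bar> \<le> C * exp (\<Lambda> * \<xi>) / (b - \<Lambda>)"
    "\<xi> \<le> \<eta> \<Longrightarrow> \<bar>(LBINT s:{\<eta>..}. exp (b * (\<eta> - s)) * h s) - (LBINT s:{\<xi>..}. exp (b * (\<xi> - s)) * h s)\<bar> \<le> 2 * M * (\<eta> - \<xi>)"
proof -
  define R where "R = (\<lambda>\<xi>. LBINT s:{\<xi>..}. exp (b * (\<xi> - s)) * h s)"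
  have b0: "b > 0" using b \<Lambda> by simp
  have M0: "M \<ge> 0" using hM[of 0] by linarith
  have ptw: "\<bar>exp (b * (\<xi> - s)) * h s\<bar> \<le> M * exp (b * (\<xi> - s))" for \<xi> s
  proof -
    have "\<bar>exp (b * (\<xi> - s)) * h s\<bar> = exp (b * (\<xi> - s)) * \<bar>h s\<bar>" by (simp add: abs_mult)
    also have "\<dots> \<le> exp (b * (\<xi> - s)) * M" by (rule mult_left_mono[OF hM]) simp
    finally show ?thesis by (simp add: mult.commute)
  qed
  have int: "set_integrable lborel {\<xi>..} (\<lambda>s. exp (b * (\<xi> - s)) * h s)" for \<xi>
  proof (rule set_integrable_bound[where f="\<lambda>s. M * exp (b * (\<xi> - s))"])
    show "set_integrable lborel {\<xi>..} (\<lambda>s. M * exp (b * (\<xi> - s)))"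
      using kerR(1)[OF b0] by simp
    show "set_borel_measurable lborel {\<xi>..} (\<lambda>s. exp (b * (\<xi> - s)) * h s)"
      by (rule meas_sbm) (auto intro!: continuous_intros hc)
    show "AE x in lborel. x \<in> {\<xi>..} \<longrightarrow> norm (exp (b * (\<xi> - x)) * h x) \<le> norm (M * exp (b * (\<xi> - x)))"
      using ptw M0 by (simp add: abs_mult)
  qed
  show "set_integrable lborel {\<xi>..} (\<lambda>s. exp (b * (\<xi> - s)) * h s)" by (rule int)
  have bnd: "\<bar>LBINT s:S. g s\<bar> \<le> (LBINT s:S. B s)" if i1: "set_integrable lborel S g" and i2: "set_integrable lborel S B"
    and i3: "\<And>s. s \<in> S \<Longrightarrow> \<bar>g s\<bar> \<le> B s" for S :: "real set" and g B :: "real \<Rightarrow> real"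
  proof -
    have "(LBINT s:S. g s) \<le> (LBINT s:S. B s)"
      by (rule set_integral_mono[OF i1 i2]) (use i3 in \<open>force\<close>)
    moreover have pw: "- B s \<le> g s" if "s \<in> S" for s using i3[OF that] by linarith
    have "(LBINT s:S. - B s) \<le> (LBINT s:S. g s)"
      by (rule set_integral_mono[OF _ i1]) (use i2 pw in \<open>auto simp: set_integrable_def\<close>)
    moreover have "(LBINT s:S. - B s) = - (LBINT s:S. B s)"
      by (rule set_integral_uminus[OF i2])
    ultimately show ?thesis by linarith
  qed
  have bM: "\<bar>R \<xi>\<bar> \<le> M / b" for \<xi>
  proof -
    have "\<bar>R \<xi>\<bar> \<le> (LBINT s:{\<xi>..}. M * exp (b * (\<xi> - s)))" unfolding R_def
      by (rule bnd[OF int]) (use kerR(1)[OF b0] ptw in auto)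
    also have "\<dots> = M / b" using kerR(2)[OF b0, of \<xi>] by simp
    finally show ?thesis .
  qed
  then show "\<bar>LBINT s:{\<xi>..}. exp (b * (\<xi> - s)) * h s\<bar> \<le> M / b" unfolding R_def .
  have bL: "b - \<Lambda> > 0" using b by simp
  have eqe: "exp (b * (\<xi> - s)) * (C * exp (\<Lambda> * s)) = C * exp (\<Lambda> * \<xi>) * exp ((b - \<Lambda>) * (\<xi> - s))" for s
  proof -
    have "exp (b * (\<xi> - s)) * exp (\<Lambda> * s) = exp (\<Lambda> * \<xi>) * exp ((b - \<Lambda>) * (\<xi> - s))"
      by (simp add: exp_add[symmetric] algebra_simps)
    then show ?thesis by (metis mult.left_commute mult.assoc)
  qed
  have "\<bar>R \<xi>\<bar> \<le> (LBINT s:{\<xi>..}. C * exp (\<Lambda> * \<xi>) * exp ((b - \<Lambda>) * (\<xi> - s)))" unfolding R_def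
  proof (rule bnd[OF int])
    show "set_integrable lborel {\<xi>..} (\<lambda>s. C * exp (\<Lambda> * \<xi>) * exp ((b - \<Lambda>) * (\<xi> - s)))"
      using kerR(1)[OF bL] by simp
    fix s
    have "\<bar>exp (b * (\<xi> - s)) * h s\<bar> = exp (b * (\<xi> - s)) * \<bar>h s\<bar>" by (simp add: abs_mult)
    also have "\<dots> \<le> exp (b * (\<xi> - s)) * (C * exp (\<Lambda> * s))" by (rule mult_left_mono[OF hC]) simp
    finally show "\<bar>exp (b * (\<xi> - s)) * h s\<bar> \<le> C * exp (\<Lambda> * \<xi>) * exp ((b - \<Lambda>) * (\<xi> - s))"
      by (simp only: eqe)
  qed
  also have "\<dots> = C * exp (\<Lambda> * \<xi>) / (b - \<Lambda>)" using kerR(2)[OF bL, of \<xi>] by simp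
  finally show "\<bar>LBINT s:{\<xi>..}. exp (b * (\<xi> - s)) * h s\<bar> \<le> C * exp (\<Lambda> * \<xi>) / (b - \<Lambda>)"
    unfolding R_def .
  assume le: "\<xi> \<le> \<eta>"
  let ?g = "\<lambda>s. exp (b * (\<xi> - s)) * h s"
  have un: "{\<xi>..} = {\<xi>..<\<eta>} \<union> {\<eta>..}" using le by auto
  have i1: "set_integrable lborel {\<xi>..<\<eta>} ?g" by (rule set_integrable_subset[OF int]) auto
  have i2: "set_integrable lborel {\<eta>..} ?g" by (rule set_integrable_subset[OF int]) (use le in auto)
  have Rs: "R \<xi> = (LBINT s:{\<xi>..<\<eta>}. ?g s) + (LBINT s:{\<eta>..}. ?g s)"
    unfolding R_def un by (rule set_integral_Un[OF _ i1 i2]) auto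
  have ge: "?g = (\<lambda>s. exp (- b * (\<eta> - \<xi>)) * (exp (b * (\<eta> - s)) * h s))"
    by (simp add: fun_eq_iff exp_add[symmetric] algebra_simps)
  have P1: "(LBINT s:{\<eta>..}. ?g s) = exp (- b * (\<eta> - \<xi>)) * R \<eta>"
    unfolding R_def by (subst ge) simp
  have P2: "\<bar>LBINT s:{\<xi>..<\<eta>}. ?g s\<bar> \<le> M * (\<eta> - \<xi>)"
  proof -
    have "\<bar>LBINT s:{\<xi>..<\<eta>}. ?g s\<bar> \<le> (LBINT s:{\<xi>..<\<eta>}. M)"
    proof (rule bnd[OF i1 const_int(3)[OF le]])
      fix s assume "s \<in> {\<xi>..<\<eta>}"
      then have "exp (b * (\<xi> - s)) \<le> 1" using b0 by (simp add: mult_nonneg_nonpos)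
      then have "M * exp (b * (\<xi> - s)) \<le> M" using M0 by (simp add: mult_left_le)
      then show "\<bar>?g s\<bar> \<le> M" using ptw[of \<xi> s] by linarith
    qed
    then show ?thesis using const_int(4)[OF le] by simp
  qed
  define E where "E = exp (- b * (\<eta> - \<xi>))"
  have E1: "E \<le> 1" unfolding E_def using b0 le by (simp add: mult_nonneg_nonneg)
  have E2: "1 - E \<le> b * (\<eta> - \<xi>)" unfolding E_def using exp_ge_add_one_self[of "- b * (\<eta> - \<xi>)"] by simp
  have "\<bar>(1 - E) * R \<eta>\<bar> = (1 - E) * \<bar>R \<eta>\<bar>" using E1 by (simp add: abs_mult)
  also have "\<dots> \<le> (b * (\<eta> - \<xi>)) * (M / b)"
    by (rule mult_mono[OF E2 bM]) (use E1 b0 le in auto)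
  also have "\<dots> = M * (\<eta> - \<xi>)" using b0 by simp
  finally have P3: "\<bar>(1 - E) * R \<eta>\<bar> \<le> M * (\<eta> - \<xi>)" .
  have "R \<eta> - R \<xi> = (1 - E) * R \<eta> - (LBINT s:{\<xi>..<\<eta>}. ?g s)"
    using Rs P1 unfolding E_def by (simp add: algebra_simps)
  then show "\<bar>(LBINT s:{\<eta>..}. exp (b * (\<eta> - s)) * h s) - (LBINT s:{\<xi>..}. exp (b * (\<xi> - s)) * h s)\<bar> \<le> 2 * M * (\<eta> - \<xi>)"
    using P2 P3 unfolding R_def by linarith
qed
lemma seq_compact_E:
  fixes x :: "nat \<Rightarrow> real \<Rightarrow> real^'n::finite" and Bd :: "real \<Rightarrow> real"
  assumes \<rho>: "\<rho> > 0"
    and Bd: "\<And>n \<xi> i. \<bar>x n \<xi> $ i\<bar> \<le> Bd \<xi>"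
    and BK: "\<And>\<xi>. Bd \<xi> \<le> K"
    and BW: "\<And>\<xi>. Bd \<xi> * exp (- \<rho> * \<xi>) \<le> W"
    and tail: "\<And>\<epsilon>. \<epsilon> > 0 \<Longrightarrow> \<exists>T. \<forall>\<xi>. T \<le> \<bar>\<xi>\<bar> \<longrightarrow> Bd \<xi> * exp (- \<rho> * \<xi>) \<le> \<epsilon>"
    and eqc: "\<And>e. e > 0 \<Longrightarrow> \<exists>\<delta>>0. \<forall>n \<xi> \<eta>. \<bar>\<xi> - \<eta>\<bar> < \<delta> \<longrightarrow> norm (x n \<xi> - x n \<eta>) < e"
  shows "\<exists>r v. strict_mono r \<and> v \<in> Espace \<rho> \<and> (\<lambda>n. wnorm \<rho> (\<lambda>\<xi>. x (r n) \<xi> - v \<xi>)) \<longlonglongrightarrow> 0"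
proof -
  have nb: "norm (x n \<xi>) \<le> real CARD('n) * K" for n \<xi>
  proof -
    have "norm (x n \<xi>) \<le> (\<Sum>i\<in>UNIV. \<bar>x n \<xi> $ i\<bar>)" by (rule norm_le_l1_cart)
    also have "\<dots> \<le> of_nat (card (UNIV::'n set)) * K"
      by (rule sum_bounded_above) (use Bd BK in \<open>meson order_trans\<close>)
    finally show ?thesis by simp
  qed
  define P where "P = (\<lambda>(m::nat) (k::nat \<Rightarrow> nat). \<forall>e>0. \<exists>N. \<forall>a\<ge>N. \<forall>b\<ge>N. \<forall>\<xi>\<in>{- real m..real m}.
      norm (x (k a) \<xi> - x (k b) \<xi>) < e)"
  obtain k :: "nat \<Rightarrow> nat" where k: "strict_mono k" "\<And>m. P m (id \<circ> k)"
  proof (rule subsequence_diagonalization_lemma[of P id])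
    fix m :: nat and r :: "nat \<Rightarrow> nat"
    have c1: "compact {- real m..real m}" by simp
    have c2: "\<And>n \<xi>. \<xi> \<in> {- real m..real m} \<Longrightarrow> norm (x (r n) \<xi>) \<le> real CARD('n) * K" by (rule nb)
    have c3: "\<exists>d>0. \<forall>n y. y \<in> {- real m..real m} \<and> norm (\<xi> - y) < d \<longrightarrow> norm (x (r n) \<xi> - x (r n) y) < e"
      if ha: "\<xi> \<in> {- real m..real m}" and hb: "0 < e" for \<xi> e
    proof -
      obtain \<delta> where "\<delta> > 0" "\<forall>n \<xi> \<eta>. \<bar>\<xi> - \<eta>\<bar> < \<delta> \<longrightarrow> norm (x n \<xi> - x n \<eta>) < e"
        using eqc hb by blast
      then show ?thesis by auto
    qed
    obtain g kk where g: "continuous_on {- real m..real m} g" "strict_mono (kk :: nat \<Rightarrow> nat)"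
      "\<And>e. 0 < e \<Longrightarrow> \<exists>N. \<forall>n \<xi>. n \<ge> N \<and> \<xi> \<in> {- real m..real m} \<longrightarrow> norm (x (r (kk n)) \<xi> - g \<xi>) < e"
      by (rule Arzela_Ascoli[of "{- real m..real m}" "\<lambda>n. x (r n)" "real CARD('n) * K", OF c1 c2 c3]) auto
    have "P m (r \<circ> kk)" unfolding P_def
    proof (intro allI impI)
      fix e :: real assume e: "e > 0"
      then obtain N where N: "\<forall>n \<xi>. n \<ge> N \<and> \<xi> \<in> {- real m..real m} \<longrightarrow> norm (x (r (kk n)) \<xi> - g \<xi>) < e / 2"
        using g(3)[of "e/2"] by auto
      show "\<exists>N. \<forall>a\<ge>N. \<forall>b\<ge>N. \<forall>\<xi>\<in>{- real m..real m}. norm (x ((r \<circ> kk) a) \<xi> - x ((r \<circ> kk) b) \<xi>) < e"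
      proof (intro exI allI impI ballI)
        fix a b \<xi> assume "N \<le> a" "N \<le> b" "\<xi> \<in> {- real m..real m}"
        then have "norm (x (r (kk a)) \<xi> - g \<xi>) < e / 2" "norm (x (r (kk b)) \<xi> - g \<xi>) < e / 2"
          using N by auto
        then show "norm (x ((r \<circ> kk) a) \<xi> - x ((r \<circ> kk) b) \<xi>) < e"
          using norm_triangle_ineq4[of "x (r (kk a)) \<xi> - g \<xi>" "x (r (kk b)) \<xi> - g \<xi>"]
          by simp
      qed
    qed
    then show "\<exists>kk. strict_mono kk \<and> P m (r \<circ> kk)" using g(2) by blast
  next
    fix m :: nat and r k1 k2 :: "nat \<Rightarrow> nat" and N :: nat
    assume h1: "P m (r \<circ> k1)" and h2: "\<And>j. N \<le> j \<Longrightarrow> \<exists>j'\<ge>j. k2 j = k1 j'"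
    show "P m (r \<circ> k2)" unfolding P_def
    proof (intro allI impI)
      fix e :: real assume "e > 0"
      then obtain N0 where N0: "\<forall>a\<ge>N0. \<forall>b\<ge>N0. \<forall>\<xi>\<in>{- real m..real m}. norm (x ((r \<circ> k1) a) \<xi> - x ((r \<circ> k1) b) \<xi>) < e"
        using h1 unfolding P_def by blast
      show "\<exists>N. \<forall>a\<ge>N. \<forall>b\<ge>N. \<forall>\<xi>\<in>{- real m..real m}. norm (x ((r \<circ> k2) a) \<xi> - x ((r \<circ> k2) b) \<xi>) < e"
      proof (intro exI[of _ "max N N0"] allI impI ballI)
        fix a b \<xi> assume "max N N0 \<le> a" "max N N0 \<le> b" "\<xi> \<in> {- real m..real m}"
        moreover obtain a' where "a' \<ge> a" "k2 a = k1 a'" using h2 \<open>max N N0 \<le> a\<close> by force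
        moreover obtain b' where "b' \<ge> b" "k2 b = k1 b'" using h2 \<open>max N N0 \<le> b\<close> by force
        ultimately show "norm (x ((r \<circ> k2) a) \<xi> - x ((r \<circ> k2) b) \<xi>) < e"
          using N0 by auto
      qed
    qed
  qed auto
  have Pk: "P m k" for m using k(2)[of m] by simp
  have cau: "Cauchy (\<lambda>n. x (k n) \<xi>)" for \<xi>
  proof -
    obtain m :: nat where m: "\<bar>\<xi>\<bar> \<le> real m" using real_arch_simple by blast
    then have \<xi>m: "\<xi> \<in> {- real m..real m}" by auto
    show ?thesis unfolding Cauchy_def dist_norm
    proof (intro allI impI)
      fix e :: real assume "e > 0"
      then obtain N where "\<forall>a\<ge>N. \<forall>b\<ge>N. \<forall>\<xi>\<in>{- real m..real m}. norm (x (k a) \<xi> - x (k b) \<xi>) < e"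
        using Pk[of m] unfolding P_def by blast
      then show "\<exists>M. \<forall>a\<ge>M. \<forall>b\<ge>M. norm (x (k a) \<xi> - x (k b) \<xi>) < e" using \<xi>m by blast
    qed
  qed
  define v where "v = (\<lambda>\<xi>. lim (\<lambda>n. x (k n) \<xi>))"
  have conv: "(\<lambda>n. x (k n) \<xi>) \<longlonglongrightarrow> v \<xi>" for \<xi>
    unfolding v_def using cau[of \<xi>] by (simp add: Cauchy_convergent_iff convergent_LIMSEQ_iff)
  have unif: "\<exists>N. \<forall>a\<ge>N. \<forall>\<xi>\<in>{- real m..real m}. norm (x (k a) \<xi> - v \<xi>) \<le> e" if "e > 0" for m e
  proof -
    obtain N where N: "\<forall>a\<ge>N. \<forall>b\<ge>N. \<forall>\<xi>\<in>{- real m..real m}. norm (x (k a) \<xi> - x (k b) \<xi>) < e"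
      using Pk[of m] \<open>e > 0\<close> unfolding P_def by blast
    have "norm (x (k a) \<xi> - v \<xi>) \<le> e" if "a \<ge> N" "\<xi> \<in> {- real m..real m}" for a \<xi>
    proof (rule LIMSEQ_le_const2)
      show "(\<lambda>b. norm (x (k a) \<xi> - x (k b) \<xi>)) \<longlonglongrightarrow> norm (x (k a) \<xi> - v \<xi>)"
        by (intro tendsto_intros conv)
      show "\<exists>N'. \<forall>b\<ge>N'. norm (x (k a) \<xi> - x (k b) \<xi>) \<le> e"
        using N that by (intro exI[of _ N]) (auto intro: less_imp_le)
    qed
    then show ?thesis by blast
  qed
  have vB: "\<bar>v \<xi> $ i\<bar> \<le> Bd \<xi>" for \<xi> i
  proof (rule LIMSEQ_le_const2)
    show "(\<lambda>n. \<bar>x (k n) \<xi> $ i\<bar>) \<longlonglongrightarrow> \<bar>v \<xi> $ i\<bar>"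
      by (intro tendsto_intros conv)
  qed (use Bd in auto)
  have veq: "norm (v \<xi> - v \<eta>) \<le> e" if "\<forall>n. norm (x n \<xi> - x n \<eta>) < e" for \<xi> \<eta> e
  proof (rule LIMSEQ_le_const2)
    show "(\<lambda>n. norm (x (k n) \<xi> - x (k n) \<eta>)) \<longlonglongrightarrow> norm (v \<xi> - v \<eta>)"
      by (intro tendsto_intros conv)
  qed (use that in \<open>auto intro: less_imp_le\<close>)
  have vcont: "continuous_on UNIV v"
    unfolding continuous_on_iff
  proof (intro ballI allI impI)
    fix \<xi> :: real and e :: real assume "e > 0"
    then obtain \<delta> where \<delta>: "\<delta> > 0" "\<forall>n \<xi> \<eta>. \<bar>\<xi> - \<eta>\<bar> < \<delta> \<longrightarrow> norm (x n \<xi> - x n \<eta>) < e / 2"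
      using eqc[of "e/2"] by auto
    show "\<exists>d>0. \<forall>x'\<in>UNIV. dist x' \<xi> < d \<longrightarrow> dist (v x') (v \<xi>) < e"
    proof (intro exI[of _ \<delta>] conjI ballI impI)
      fix \<eta> assume "dist \<eta> \<xi> < \<delta>"
      then have "norm (v \<eta> - v \<xi>) \<le> e / 2" using \<delta> by (intro veq) (simp add: dist_real_def)
      then show "dist (v \<eta>) (v \<xi>) < e" using \<open>e > 0\<close> by (simp add: dist_norm)
    qed (rule \<delta>(1))
  qed
  have vE: "v \<in> Espace \<rho>"
    unfolding Espace_def
  proof (intro CollectI conjI allI vcont)
    fix i
    show "bdd_above (range (\<lambda>\<xi>. \<bar>v \<xi> $ i\<bar> * exp (- \<rho> * \<xi>)))"
    proof (rule bdd_aboveI2)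
      fix \<xi>
      have "\<bar>v \<xi> $ i\<bar> * exp (- \<rho> * \<xi>) \<le> Bd \<xi> * exp (- \<rho> * \<xi>)"
        by (rule mult_right_mono[OF vB]) simp
      then show "\<bar>v \<xi> $ i\<bar> * exp (- \<rho> * \<xi>) \<le> W" using BW[of \<xi>] by linarith
    qed
  qed
  have "(\<lambda>n. wnorm \<rho> (\<lambda>\<xi>. x (k n) \<xi> - v \<xi>)) \<longlonglongrightarrow> 0"
    unfolding LIMSEQ_iff
  proof (intro allI impI)
    fix \<epsilon> :: real assume \<epsilon>: "\<epsilon> > 0"
    define c where "c = real CARD('n)"
    have c: "c > 0" unfolding c_def by simp
    define e1 where "e1 = \<epsilon> / (2 * c)"
    have e1: "e1 > 0" unfolding e1_def using c \<epsilon> by simp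
    obtain T where T: "\<forall>\<xi>. T \<le> \<bar>\<xi>\<bar> \<longrightarrow> Bd \<xi> * exp (- \<rho> * \<xi>) \<le> e1 / 2"
      using tail[of "e1/2"] e1 by auto
    obtain m :: nat where m: "T \<le> real m" using real_arch_simple by blast
    obtain N where N: "\<forall>a\<ge>N. \<forall>\<xi>\<in>{- real m..real m}. norm (x (k a) \<xi> - v \<xi>) \<le> e1 * exp (- \<rho> * real m)"
      using unif[of "e1 * exp (- \<rho> * real m)" m] e1 by auto
    show "\<exists>no. \<forall>n\<ge>no. norm (wnorm \<rho> (\<lambda>\<xi>. x (k n) \<xi> - v \<xi>) - 0) < \<epsilon>"
    proof (intro exI[of _ N] allI impI)
      fix n assume n: "N \<le> n"
      have pt: "\<bar>(x (k n) \<xi> - v \<xi>) $ i\<bar> * exp (- \<rho> * \<xi>) \<le> e1" for \<xi> i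
      proof (cases "\<bar>\<xi>\<bar> \<le> real m")
        case True
        have "\<bar>(x (k n) \<xi> - v \<xi>) $ i\<bar> \<le> norm (x (k n) \<xi> - v \<xi>)" by (rule component_le_norm_cart)
        also have "\<dots> \<le> e1 * exp (- \<rho> * real m)" using N n True by (simp add: abs_le_iff)
        finally have A: "\<bar>(x (k n) \<xi> - v \<xi>) $ i\<bar> \<le> e1 * exp (- \<rho> * real m)" .
        have "- \<xi> \<le> real m" using True by linarith
        then have "\<rho> * (- \<xi>) \<le> \<rho> * real m" using \<rho> by (intro mult_left_mono) auto
        then have B: "exp (- \<rho> * \<xi>) \<le> exp (\<rho> * real m)" by simp
        have "\<bar>(x (k n) \<xi> - v \<xi>) $ i\<bar> * exp (- \<rho> * \<xi>) \<le> (e1 * exp (- \<rho> * real m)) * exp (\<rho> * real m)"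
          by (rule mult_mono[OF A B]) (use e1 in auto)
        also have "\<dots> = e1" by (simp add: mult.assoc exp_add[symmetric])
        finally show ?thesis .
      next
        case False
        then have "T \<le> \<bar>\<xi>\<bar>" using m by linarith
        then have TB: "Bd \<xi> * exp (- \<rho> * \<xi>) \<le> e1 / 2" using T by auto
        have "\<bar>(x (k n) \<xi> - v \<xi>) $ i\<bar> \<le> 2 * Bd \<xi>"
          using Bd[of "k n" \<xi> i] vB[of \<xi> i] by simp
        then have "\<bar>(x (k n) \<xi> - v \<xi>) $ i\<bar> * exp (- \<rho> * \<xi>) \<le> 2 * Bd \<xi> * exp (- \<rho> * \<xi>)"
          by (intro mult_right_mono) auto
        then show ?thesis using TB by linarith
      qed
      have sup: "(SUP \<xi>. \<bar>(x (k n) \<xi> - v \<xi>) $ i\<bar> * exp (- \<rho> * \<xi>)) \<le> e1" for i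
        by (rule cSUP_least) (use pt in auto)
      have sup0: "0 \<le> (SUP \<xi>. \<bar>(x (k n) \<xi> - v \<xi>) $ i\<bar> * exp (- \<rho> * \<xi>))" for i
      proof -
        have bdd: "bdd_above (range (\<lambda>\<xi>. \<bar>(x (k n) \<xi> - v \<xi>) $ i\<bar> * exp (- \<rho> * \<xi>)))"
          by (rule bdd_aboveI2[where M=e1]) (rule pt)
        show ?thesis by (rule cSUP_upper2[OF bdd, where x=0]) auto
      qed
      have w1: "wnorm \<rho> (\<lambda>\<xi>. x (k n) \<xi> - v \<xi>) \<le> c * e1"
        unfolding wnorm_def c_def using sum_bounded_above[of "UNIV :: 'n set" _ e1] sup by simp
      have w0: "0 \<le> wnorm \<rho> (\<lambda>\<xi>. x (k n) \<xi> - v \<xi>)"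
        unfolding wnorm_def by (rule sum_nonneg) (rule sup0)
      have "c * e1 = \<epsilon> / 2" unfolding e1_def using c by simp
      then show "norm (wnorm \<rho> (\<lambda>\<xi>. x (k n) \<xi> - v \<xi>) - 0) < \<epsilon>"
        using w1 w0 \<epsilon> by simp
    qed
  qed
  then show ?thesis using k(1) vE by blast
qed

lemma lin_growth:
  fixes f :: "real^'n::finite \<Rightarrow> real^'n" and J :: "real^'n^'n"
  assumes fd: "(f has_derivative (\<lambda>h. J *v h)) (at 0 within S)" and f0: "f 0 = 0"
    and Mf: "\<forall>w\<in>S. norm (f w) \<le> Mf"
  shows "\<exists>C. C \<ge> 0 \<and> (\<forall>w\<in>S. norm (f w) \<le> C * norm w)"
proof -
  have bl: "bounded_linear (\<lambda>h. J *v h)" and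
    "\<forall>e>0. \<exists>d>0. \<forall>y\<in>S. norm (y - 0) < d \<longrightarrow> norm (f y - f 0 - J *v (y - 0)) \<le> e * norm (y - 0)"
    using fd unfolding has_derivative_within_alt by auto
  then obtain dd where dd: "dd > 0" "\<forall>y\<in>S. norm y < dd \<longrightarrow> norm (f y - J *v y) \<le> norm y"
    using f0 by (metis diff_zero mult_1 zero_less_one)
  obtain B where B: "B > 0" "\<And>h. norm (J *v h) \<le> norm h * B"
    using bounded_linear.pos_bounded[OF bl] by blast
  define Mf' where "Mf' = max Mf 0"
  define C where "C = B + 1 + Mf' / dd"
  have C0: "C \<ge> 0" unfolding C_def Mf'_def using B dd by simp
  have "norm (f w) \<le> C * norm w" if w: "w \<in> S" for w
  proof (cases "norm w < dd")
    case True
    have "norm (f w) \<le> norm (f w - J *v w) + norm (J *v w)" using norm_triangle_ineq[of "f w - J *v w" "J *v w"] by simp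
    also have "\<dots> \<le> norm w + norm w * B" using dd True w B(2)[of w] by (intro add_mono) auto
    also have "\<dots> \<le> C * norm w" unfolding C_def Mf'_def using dd
      by (simp add: algebra_simps)
    finally show ?thesis .
  next
    case False
    have "norm (f w) \<le> Mf'" using Mf w unfolding Mf'_def by force
    also have "\<dots> \<le> (Mf' / dd) * norm w"
    proof -
      have "Mf' * 1 \<le> Mf' * (norm w / dd)" using False dd unfolding Mf'_def
        by (intro mult_left_mono) auto
      then show ?thesis by simp
    qed
    also have "\<dots> \<le> C * norm w" unfolding C_def using B by (intro mult_right_mono) auto
    finally show ?thesis .
  qed
  then show ?thesis using C0 by blast
qed

lemma espace_memb:
  fixes w :: "real \<Rightarrow> real^'n::finite"
  assumes Bd: "\<And>\<xi> i. \<bar>w \<xi> $ i\<bar> \<le> Bd \<xi>" and BW: "\<And>\<xi>. Bd \<xi> * exp (- \<rho> * \<xi>) \<le> W"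
    and Lip: "\<And>\<xi> \<eta>. norm (w \<xi> - w \<eta>) \<le> Lc * \<bar>\<xi> - \<eta>\<bar>" and Lc: "Lc \<ge> 0"
  shows "w \<in> Espace \<rho>"
  unfolding Espace_def
proof (intro CollectI conjI allI)
  show "continuous_on UNIV w" unfolding continuous_on_iff
  proof (intro ballI allI impI)
    fix \<xi> :: real and e :: real assume e: "e > 0"
    show "\<exists>d>0. \<forall>x'\<in>UNIV. dist x' \<xi> < d \<longrightarrow> dist (w x') (w \<xi>) < e"
    proof (intro exI[of _ "e / (Lc + 1)"] conjI ballI impI)
      show "e / (Lc + 1) > 0" using e Lc by simp
      fix \<eta> assume "dist \<eta> \<xi> < e / (Lc + 1)"
      then have "\<bar>\<eta> - \<xi>\<bar> * (Lc + 1) < e" using Lc by (simp add: dist_real_def field_simps)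
      moreover have "norm (w \<eta> - w \<xi>) \<le> Lc * \<bar>\<eta> - \<xi>\<bar>" by (rule Lip)
      moreover have "Lc * \<bar>\<eta> - \<xi>\<bar> \<le> \<bar>\<eta> - \<xi>\<bar> * (Lc + 1)" by (simp add: algebra_simps)
      ultimately show "dist (w \<eta>) (w \<xi>) < e" by (simp add: dist_norm)
    qed
  qed
  fix i
  show "bdd_above (range (\<lambda>\<xi>. \<bar>w \<xi> $ i\<bar> * exp (- \<rho> * \<xi>)))"
  proof (rule bdd_aboveI2)
    fix \<xi>
    have "\<bar>w \<xi> $ i\<bar> * exp (- \<rho> * \<xi>) \<le> Bd \<xi> * exp (- \<rho> * \<xi>)"
      by (rule mult_right_mono[OF Bd]) simp
    then show "\<bar>w \<xi> $ i\<bar> * exp (- \<rho> * \<xi>) \<le> W" using BW[of \<xi>] by linarith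
  qed
qed

lemma minexp_bound:
  fixes \<Lambda> \<rho> \<xi> :: real
  assumes "0 < \<rho>" "\<rho> < \<Lambda>"
  shows "min 1 (exp (\<Lambda> * \<xi>)) * exp (- \<rho> * \<xi>) \<le> exp (- min \<rho> (\<Lambda> - \<rho>) * \<bar>\<xi>\<bar>)"
proof (cases "\<xi> \<ge> 0")
  case True
  have "min 1 (exp (\<Lambda> * \<xi>)) * exp (- \<rho> * \<xi>) \<le> 1 * exp (- \<rho> * \<xi>)"
    by (intro mult_right_mono) auto
  also have "\<dots> \<le> exp (- min \<rho> (\<Lambda> - \<rho>) * \<bar>\<xi>\<bar>)"
    using True assms by (simp add: mult_right_mono)
  finally show ?thesis .
next
  case False
  have "min 1 (exp (\<Lambda> * \<xi>)) * exp (- \<rho> * \<xi>) \<le> exp (\<Lambda> * \<xi>) * exp (- \<rho> * \<xi>)"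
    by (intro mult_right_mono) auto
  also have "\<dots> = exp ((\<Lambda> - \<rho>) * \<xi>)" by (simp add: exp_add[symmetric] algebra_simps)
  also have "\<dots> \<le> exp (- min \<rho> (\<Lambda> - \<rho>) * \<bar>\<xi>\<bar>)"
  proof -
    have "min \<rho> (\<Lambda> - \<rho>) * (- \<xi>) \<le> (\<Lambda> - \<rho>) * (- \<xi>)"
      using False by (intro mult_right_mono) auto
    then show ?thesis using False by simp
  qed
  finally show ?thesis .
qed

theorem lemma4p7:
  fixes d k kp km :: "real^('n::{finite,linorder})"
    and f fp fm :: "real^('n::{finite,linorder}) \<Rightarrow> real^('n::{finite,linorder})"
    and J :: "real^('n::{finite,linorder})^('n::{finite,linorder})"
    and \<nu> :: "real \<Rightarrow> real^('n::{finite,linorder})"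
    and c \<Lambda> \<beta> \<gamma> q \<rho> :: real
  assumes d_pos: "\<forall>i. d $ i > 0"
    \<comment> \<open>(H1)\<close>
    and kp_pos: "\<forall>i. kp $ i > 0"
    and f_pw: "pw_C2_on {0..kp} f"
    and f_glob: "global_existence d kp f"
    and km_pos: "\<forall>i. km $ i > 0"
    and k_ord: "km \<le> k" "k \<le> kp"
    and fp_pw: "pw_C2_on {0..kp} fp"
    and fm_pw: "pw_C2_on {0..km} fm"
    and fm_le: "\<forall>u\<in>{0..km}. fm u \<le> f u"
    and f_le: "\<forall>u\<in>{0..kp}. f u \<le> fp u"
    and f_eq: "f 0 = 0" "f k = 0"
    and fp_eq: "fp 0 = 0" "fp kp = 0"
    and fm_eq: "fm 0 = 0" "fm km = 0"
    and f_noeq: "\<forall>u\<in>{0..k}. (\<forall>i. u $ i > 0) \<and> f u = 0 \<longrightarrow> u = k"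
    and fp_noeq: "\<forall>u\<in>{0..kp}. (\<forall>i. u $ i > 0) \<and> fp u = 0 \<longrightarrow> u = kp"
    and fm_noeq: "\<forall>u\<in>{0..km}. (\<forall>i. u $ i > 0) \<and> fm u = 0 \<longrightarrow> u = km"
    and fp_coop: "cooperative_on {0..kp} fp"
    and fm_coop: "cooperative_on {0..km} fm"
    and f_jac: "(f has_derivative (\<lambda>h. J *v h)) (at 0 within {0..kp})"
    and fp_jac: "(fp has_derivative (\<lambda>h. J *v h)) (at 0 within {0..kp})"
    and fm_jac: "(fm has_derivative (\<lambda>h. J *v h)) (at 0 within {0..km})"
    \<comment> \<open>(H2)\<close>
    and A_blocks: "\<forall>l>0. H2_blocks (Amat d J l)"
    and \<nu>_pos: "\<forall>l>0. \<forall>i. \<nu> l $ i > 0"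
    and \<nu>_eig: "\<forall>l>0. Amat d J l *v \<nu> l = Psi (Amat d J l) *\<^sub>R \<nu> l"
    and \<nu>_cont: "continuous_on {0<..} \<nu>"
    \<comment> \<open>(H3)\<close>
    and H3p: "\<forall>\<alpha>>0. \<forall>l>0. \<alpha> *\<^sub>R \<nu> l \<in> {0..kp} \<longrightarrow> fp (\<alpha> *\<^sub>R \<nu> l) \<le> \<alpha> *\<^sub>R (J *v \<nu> l)"
    and H3m: "\<forall>\<alpha>>0. \<forall>l>0. \<alpha> *\<^sub>R \<nu> l \<in> {0..km} \<longrightarrow> fm (\<alpha> *\<^sub>R \<nu> l) \<le> \<alpha> *\<^sub>R (J *v \<nu> l)"
    \<comment> \<open>setup: c > c*, \<Lambda> = \<Lambda>_c smallest positive solution of \<Phi>(l) = c\<close>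
    and c_gt: "c > cstar d J"
    and \<Lambda>_pos: "\<Lambda> > 0"
    and \<Lambda>_sol: "Phi d J \<Lambda> = c"
    and \<Lambda>_least: "\<forall>l. 0 < l \<and> l < \<Lambda> \<longrightarrow> Phi d J l \<noteq> c"
    \<comment> \<open>the constant \<beta>\<close>
    and \<beta>_bound: "deriv_bound_on {0..kp} f \<beta>"
    and \<beta>_lam: "\<forall>i. lam2 d \<beta> c i > lam1 d \<beta> c i \<and> lam1 d \<beta> c i > 2 * \<Lambda>"
    \<comment> \<open>the functions \<phi>^\<plusminus>\<close>
    and \<gamma>_range: "1 < \<gamma>" "\<gamma> < 2"
    and q_gt: "q > 1"
    and phi_lt: "\<forall>\<xi>. phim \<nu> \<Lambda> \<gamma> q \<xi> \<le> phip k \<nu> \<Lambda> \<xi> \<and> phim \<nu> \<Lambda> \<gamma> q \<xi> \<noteq> phip k \<nu> \<Lambda> \<xi>"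
    \<comment> \<open>the weight\<close>
    and \<rho>_range: "0 < \<rho>" "\<rho> < \<Lambda>"
  shows "rel_compact_E \<rho>
           (Top d \<beta> c f ` {u \<in> Espace \<rho>. \<forall>\<xi>. phim \<nu> \<Lambda> \<gamma> q \<xi> \<le> u \<xi> \<and> u \<xi> \<le> phip k \<nu> \<Lambda> \<xi>})"
proof -
  let ?A = "{u \<in> Espace \<rho>. \<forall>\<xi>. phim \<nu> \<Lambda> \<gamma> q \<xi> \<le> u \<xi> \<and> u \<xi> \<le> phip k \<nu> \<Lambda> \<xi>}"
  define a where "a = lam1 d \<beta> c"
  define b where "b = lam2 d \<beta> c"
  have ab: "b i > a i" "a i > 2 * \<Lambda>" for i using \<beta>_lam unfolding a_def b_def by auto
  have a0: "a i > 0" for i using ab(2)[of i] \<Lambda>_pos by linarith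
  have b\<Lambda>: "b i > \<Lambda>" for i using ab[of i] \<Lambda>_pos by linarith
  define ci where "ci = (\<lambda>i. 1 / (d $ i * (a i + b i)))"
  have ci0: "ci i > 0" for i unfolding ci_def using d_pos a0[of i] b\<Lambda>[of i] \<Lambda>_pos by simp
  have fcont: "continuous_on {0..kp} f" using f_pw unfolding pw_C2_on_def by blast
  have compK: "compact {0..kp}" unfolding interval_cbox_cart by (rule compact_cbox)
  have "bounded ((\<lambda>w. \<beta> *\<^sub>R w + f w) ` {0..kp})"
    by (rule compact_imp_bounded[OF compact_continuous_image[OF continuous_on_add[OF continuous_on_scaleR[OF continuous_on_const continuous_on_id] fcont] compK]])
  then obtain M where M: "\<forall>w\<in>{0..kp}. norm (\<beta> *\<^sub>R w + f w) \<le> M" unfolding bounded_iff by auto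
  have "bounded (f ` {0..kp})" by (rule compact_imp_bounded[OF compact_continuous_image[OF fcont compK]])
  then obtain Mf where Mf: "\<forall>w\<in>{0..kp}. norm (f w) \<le> Mf" unfolding bounded_iff by auto
  obtain C' where C': "C' \<ge> 0" "\<forall>w\<in>{0..kp}. norm (f w) \<le> C' * norm w"
    using lin_growth[OF f_jac f_eq(1) Mf] by blast
  define Ch where "Ch = (\<bar>\<beta>\<bar> + C') * (\<Sum>j\<in>UNIV. \<nu> \<Lambda> $ j)"
  have \<nu>0: "\<nu> \<Lambda> $ j > 0" for j using \<nu>_pos \<Lambda>_pos by auto
  have Ch0: "Ch \<ge> 0" unfolding Ch_def using C' \<nu>0 by (intro mult_nonneg_nonneg sum_nonneg) (auto intro: less_imp_le)
  have kp0: "0 \<in> {0..kp}" using kp_pos by (simp add: less_eq_vec_def less_imp_le)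
  have M0: "M \<ge> 0" using M kp0 norm_ge_zero[of "\<beta> *\<^sub>R 0 + f 0"] by (meson order_trans)
  have uprops: "u \<xi> \<in> {0..kp}" "0 \<le> u \<xi> $ j" "u \<xi> $ j \<le> \<nu> \<Lambda> $ j * exp (\<Lambda> * \<xi>)"
    if u: "u \<in> ?A" for u \<xi> j
  proof -
    have lo: "phim \<nu> \<Lambda> \<gamma> q \<xi> \<le> u \<xi>" and hi: "u \<xi> \<le> phip k \<nu> \<Lambda> \<xi>" using u by auto
    have "0 \<le> phim \<nu> \<Lambda> \<gamma> q \<xi> $ j" for j unfolding phim_def by simp
    then show l: "0 \<le> u \<xi> $ j" for j using lo unfolding less_eq_vec_def by (meson order_trans)
    have "u \<xi> $ j \<le> min (k $ j) (\<nu> \<Lambda> $ j * exp (\<Lambda> * \<xi>))" for j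
      using hi unfolding less_eq_vec_def phip_def by auto
    then show "u \<xi> $ j \<le> \<nu> \<Lambda> $ j * exp (\<Lambda> * \<xi>)" by simp
    have "u \<xi> $ j \<le> kp $ j" for j using \<open>\<And>j. u \<xi> $ j \<le> min (k $ j) _\<close>[of j] k_ord(2) unfolding less_eq_vec_def
      by (meson min.boundedE order_trans)
    then show "u \<xi> \<in> {0..kp}" using l by (simp add: less_eq_vec_def)
  qed
  have hprops: "continuous_on UNIV (\<lambda>s. \<beta> * u s $ i + f (u s) $ i)"
    "\<And>s. \<bar>\<beta> * u s $ i + f (u s) $ i\<bar> \<le> M"
    "\<And>s. \<bar>\<beta> * u s $ i + f (u s) $ i\<bar> \<le> Ch * exp (\<Lambda> * s)"
    if u: "u \<in> ?A" for u i
  proof -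
    have uc: "continuous_on UNIV u" using u unfolding Espace_def by auto
    have uK: "u s \<in> {0..kp}" for s using uprops(1)[OF u] .
    have "continuous_on UNIV (\<lambda>s. f (u s))"
      by (rule continuous_on_compose2[OF fcont uc]) (use uK in auto)
    then show "continuous_on UNIV (\<lambda>s. \<beta> * u s $ i + f (u s) $ i)"
      by (intro continuous_intros uc)
    fix s
    have eq: "\<beta> * u s $ i + f (u s) $ i = (\<beta> *\<^sub>R u s + f (u s)) $ i" by simp
    show "\<bar>\<beta> * u s $ i + f (u s) $ i\<bar> \<le> M"
      unfolding eq using component_le_norm_cart[of "\<beta> *\<^sub>R u s + f (u s)" i] M uK[of s] by force
    have nu: "norm (u s) \<le> (\<Sum>j\<in>UNIV. \<nu> \<Lambda> $ j) * exp (\<Lambda> * s)"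
    proof -
      have "norm (u s) \<le> (\<Sum>j\<in>UNIV. \<bar>u s $ j\<bar>)" by (rule norm_le_l1_cart)
      also have "\<dots> \<le> (\<Sum>j\<in>UNIV. \<nu> \<Lambda> $ j * exp (\<Lambda> * s))"
        by (rule sum_mono) (use uprops(2,3)[OF u] in auto)
      also have "\<dots> = (\<Sum>j\<in>UNIV. \<nu> \<Lambda> $ j) * exp (\<Lambda> * s)" by (simp add: sum_distrib_right)
      finally show ?thesis .
    qed
    have "\<bar>\<beta> * u s $ i + f (u s) $ i\<bar> \<le> \<bar>\<beta>\<bar> * \<bar>u s $ i\<bar> + \<bar>f (u s) $ i\<bar>"
      by (simp add: abs_mult abs_triangle_ineq[THEN order_trans])
    also have "\<dots> \<le> \<bar>\<beta>\<bar> * norm (u s) + C' * norm (u s)"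
      using component_le_norm_cart[of "u s" i] component_le_norm_cart[of "f (u s)" i] C'(2) uK[of s]
      by (intro add_mono mult_left_mono) force+
    also have "\<dots> = (\<bar>\<beta>\<bar> + C') * norm (u s)" by (simp add: algebra_simps)
    also have "\<dots> \<le> (\<bar>\<beta>\<bar> + C') * ((\<Sum>j\<in>UNIV. \<nu> \<Lambda> $ j) * exp (\<Lambda> * s))"
      by (rule mult_left_mono[OF nu]) (use C' in auto)
    also have "\<dots> = Ch * exp (\<Lambda> * s)" unfolding Ch_def by simp
    finally show "\<bar>\<beta> * u s $ i + f (u s) $ i\<bar> \<le> Ch * exp (\<Lambda> * s)" .
  qed
  have Tcomp: "Top d \<beta> c f u \<xi> $ i = ci i * ((LBINT s:{..\<xi>}. exp (- a i * (\<xi> - s)) * (\<beta> * u s $ i + f (u s) $ i))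
      + (LBINT s:{\<xi>..}. exp (b i * (\<xi> - s)) * (\<beta> * u s $ i + f (u s) $ i)))" for u \<xi> i
    by (simp add: Top_def a_def b_def ci_def)
  have key: "\<bar>Top d \<beta> c f u \<xi> $ i\<bar> \<le> ci i * (M / a i + M / b i)"
    "\<bar>Top d \<beta> c f u \<xi> $ i\<bar> \<le> ci i * (Ch / (a i + \<Lambda>) + Ch / (b i - \<Lambda>)) * exp (\<Lambda> * \<xi>)"
    "\<xi> \<le> \<eta> \<Longrightarrow> \<bar>Top d \<beta> c f u \<eta> $ i - Top d \<beta> c f u \<xi> $ i\<bar> \<le> ci i * (4 * M) * (\<eta> - \<xi>)"
    if u: "u \<in> ?A" for u \<xi> \<eta> i
  proof -
    define h where "h = (\<lambda>s. \<beta> * u s $ i + f (u s) $ i)"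
    have hc: "continuous_on UNIV h" and hM: "\<And>s. \<bar>h s\<bar> \<le> M" and hC: "\<And>s. \<bar>h s\<bar> \<le> Ch * exp (\<Lambda> * s)"
      unfolding h_def using hprops[OF u] by auto
    have \<Lambda>0: "\<Lambda> \<ge> 0" using \<Lambda>_pos by simp
    note L = Lest[OF a0[of i] hc hM hC \<Lambda>0]
    note R = Rest[OF b\<Lambda>[of i] hc hM hC \<Lambda>0]
    define LL where "LL = (\<lambda>\<xi>. LBINT s:{..\<xi>}. exp (- a i * (\<xi> - s)) * h s)"
    define RR where "RR = (\<lambda>\<xi>. LBINT s:{\<xi>..}. exp (b i * (\<xi> - s)) * h s)"
    have T: "Top d \<beta> c f u \<xi> $ i = ci i * (LL \<xi> + RR \<xi>)" for \<xi>
      unfolding Tcomp LL_def RR_def h_def ..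
    have ci: "ci i > 0" by (rule ci0)
    have "\<bar>Top d \<beta> c f u \<xi> $ i\<bar> = ci i * \<bar>LL \<xi> + RR \<xi>\<bar>" unfolding T using ci by (simp add: abs_mult)
    also have "\<dots> \<le> ci i * (M / a i + M / b i)"
      using L(2)[of \<xi>] R(2)[of \<xi>] ci unfolding LL_def RR_def
      by (intro mult_left_mono) (auto simp: abs_triangle_ineq[THEN order_trans])
    finally show "\<bar>Top d \<beta> c f u \<xi> $ i\<bar> \<le> ci i * (M / a i + M / b i)" .
    have "\<bar>Top d \<beta> c f u \<xi> $ i\<bar> = ci i * \<bar>LL \<xi> + RR \<xi>\<bar>" unfolding T using ci by (simp add: abs_mult)
    also have "\<dots> \<le> ci i * (Ch * exp (\<Lambda> * \<xi>) / (a i + \<Lambda>) + Ch * exp (\<Lambda> * \<xi>) / (b i - \<Lambda>))"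
      using L(3)[of \<xi>] R(3)[of \<xi>] ci unfolding LL_def RR_def
      by (intro mult_left_mono) (auto simp: abs_triangle_ineq[THEN order_trans])
    also have "\<dots> = ci i * (Ch / (a i + \<Lambda>) + Ch / (b i - \<Lambda>)) * exp (\<Lambda> * \<xi>)"
      by (simp add: field_simps)
    finally show "\<bar>Top d \<beta> c f u \<xi> $ i\<bar> \<le> ci i * (Ch / (a i + \<Lambda>) + Ch / (b i - \<Lambda>)) * exp (\<Lambda> * \<xi>)" .
    assume le: "\<xi> \<le> \<eta>"
    have "Top d \<beta> c f u \<eta> $ i - Top d \<beta> c f u \<xi> $ i = ci i * ((LL \<eta> - LL \<xi>) + (RR \<eta> - RR \<xi>))"
      unfolding T by (simp add: algebra_simps)
    then have "\<bar>Top d \<beta> c f u \<eta> $ i - Top d \<beta> c f u \<xi> $ i\<bar> = ci i * \<bar>(LL \<eta> - LL \<xi>) + (RR \<eta> - RR \<xi>)\<bar>"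
      using ci by (simp add: abs_mult)
    also have "\<dots> \<le> ci i * (2 * M * (\<eta> - \<xi>) + 2 * M * (\<eta> - \<xi>))"
      using L(4)[OF le] R(4)[OF le] ci unfolding LL_def RR_def
      by (intro mult_left_mono) (auto simp: abs_triangle_ineq[THEN order_trans])
    also have "\<dots> = ci i * (4 * M) * (\<eta> - \<xi>)" by (simp add: algebra_simps)
    finally show "\<bar>Top d \<beta> c f u \<eta> $ i - Top d \<beta> c f u \<xi> $ i\<bar> \<le> ci i * (4 * M) * (\<eta> - \<xi>)" .
  qed
  define X1 where "X1 = (\<lambda>i. ci i * (M / a i + M / b i))"
  define X2 where "X2 = (\<lambda>i. ci i * (Ch / (a i + \<Lambda>) + Ch / (b i - \<Lambda>)))"
  have X1p: "X1 i \<ge> 0" for i unfolding X1_def using ci0[of i] M0 a0[of i] b\<Lambda>[of i] \<Lambda>_pos by simp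
  have X2p: "X2 i \<ge> 0" for i unfolding X2_def using ci0[of i] Ch0 a0[of i] b\<Lambda>[of i] \<Lambda>_pos by simp
  define K where "K = (\<Sum>i\<in>UNIV. X1 i + X2 i)"
  have XK: "X1 i \<le> K" "X2 i \<le> K" for i
  proof -
    have "X1 i + X2 i \<le> K" unfolding K_def
      by (rule member_le_sum) (use X1p X2p in auto)
    then show "X1 i \<le> K" "X2 i \<le> K" using X1p[of i] X2p[of i] by linarith+
  qed
  have K0: "K \<ge> 0" using XK(1) X1p by (meson order_trans)
  define Bd where "Bd = (\<lambda>\<xi>::real. K * min 1 (exp (\<Lambda> * \<xi>)))"
  have Bdu: "\<bar>Top d \<beta> c f u \<xi> $ i\<bar> \<le> Bd \<xi>" if u: "u \<in> ?A" for u \<xi> i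
  proof (cases "exp (\<Lambda> * \<xi>) \<le> 1")
    case True
    have "\<bar>Top d \<beta> c f u \<xi> $ i\<bar> \<le> X2 i * exp (\<Lambda> * \<xi>)" using key(2)[OF u] unfolding X2_def .
    also have "\<dots> \<le> K * exp (\<Lambda> * \<xi>)" by (rule mult_right_mono[OF XK(2)]) simp
    finally show ?thesis unfolding Bd_def using True by simp
  next
    case False
    have "\<bar>Top d \<beta> c f u \<xi> $ i\<bar> \<le> X1 i" using key(1)[OF u] unfolding X1_def .
    also have "\<dots> \<le> K" by (rule XK(1))
    finally show ?thesis unfolding Bd_def using False by simp
  qed
  define Lc where "Lc = (\<Sum>i\<in>UNIV. ci i * (4 * M))"
  have Lc0: "Lc \<ge> 0" unfolding Lc_def using ci0 M0 by (intro sum_nonneg) (simp add: less_imp_le)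
  have Lip: "norm (Top d \<beta> c f u \<xi> - Top d \<beta> c f u \<eta>) \<le> Lc * \<bar>\<xi> - \<eta>\<bar>" if u: "u \<in> ?A" for u \<xi> \<eta>
  proof -
    have comp: "\<bar>(Top d \<beta> c f u \<xi> - Top d \<beta> c f u \<eta>) $ i\<bar> \<le> ci i * (4 * M) * \<bar>\<xi> - \<eta>\<bar>" for i
    proof (cases "\<xi> \<le> \<eta>")
      case True
      then show ?thesis using key(3)[OF u True, of i] by (simp add: abs_minus_commute)
    next
      case False
      then show ?thesis using key(3)[OF u, of \<eta> \<xi> i] by (simp add: abs_minus_commute)
    qed
    have "norm (Top d \<beta> c f u \<xi> - Top d \<beta> c f u \<eta>) \<le> (\<Sum>i\<in>UNIV. \<bar>(Top d \<beta> c f u \<xi> - Top d \<beta> c f u \<eta>) $ i\<bar>)"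
      by (rule norm_le_l1_cart)
    also have "\<dots> \<le> (\<Sum>i\<in>UNIV. ci i * (4 * M) * \<bar>\<xi> - \<eta>\<bar>)" by (rule sum_mono) (rule comp)
    also have "\<dots> = Lc * \<bar>\<xi> - \<eta>\<bar>" unfolding Lc_def by (simp add: sum_distrib_right)
    finally show ?thesis .
  qed
  define \<delta>0 where "\<delta>0 = min \<rho> (\<Lambda> - \<rho>)"
  have \<delta>0: "\<delta>0 > 0" unfolding \<delta>0_def using \<rho>_range by simp
  have Bdexp: "Bd \<xi> * exp (- \<rho> * \<xi>) \<le> K * exp (- \<delta>0 * \<bar>\<xi>\<bar>)" for \<xi>
    unfolding Bd_def \<delta>0_def using minexp_bound[OF \<rho>_range, of \<xi>] K0
    by (simp add: mult.assoc mult_left_mono)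
  have BW: "Bd \<xi> * exp (- \<rho> * \<xi>) \<le> K" for \<xi>
  proof -
    have "exp (- \<delta>0 * \<bar>\<xi>\<bar>) \<le> 1" using \<delta>0 by simp
    then have "K * exp (- \<delta>0 * \<bar>\<xi>\<bar>) \<le> K" using K0 by (simp add: mult_left_le)
    then show ?thesis using Bdexp[of \<xi>] by linarith
  qed
  have BK: "Bd \<xi> \<le> K" for \<xi> unfolding Bd_def using K0 by (simp add: mult_left_le)
  have tail: "\<exists>T. \<forall>\<xi>. T \<le> \<bar>\<xi>\<bar> \<longrightarrow> Bd \<xi> * exp (- \<rho> * \<xi>) \<le> \<epsilon>" if \<epsilon>: "\<epsilon> > 0" for \<epsilon>
  proof (intro exI[of _ "- ln (\<epsilon> / (K + 1)) / \<delta>0"] allI impI)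
    fix \<xi> :: real assume T: "- ln (\<epsilon> / (K + 1)) / \<delta>0 \<le> \<bar>\<xi>\<bar>"
    then have "- ln (\<epsilon> / (K + 1)) \<le> \<delta>0 * \<bar>\<xi>\<bar>" using \<delta>0 by (simp add: field_simps)
    then have "exp (- \<delta>0 * \<bar>\<xi>\<bar>) \<le> exp (ln (\<epsilon> / (K + 1)))" by simp
    also have "\<dots> = \<epsilon> / (K + 1)" using \<epsilon> K0 by simp
    finally have "K * exp (- \<delta>0 * \<bar>\<xi>\<bar>) \<le> K * (\<epsilon> / (K + 1))" using K0 by (rule mult_left_mono)
    also have "\<dots> \<le> \<epsilon>" using K0 \<epsilon> by (simp add: field_simps)
    finally show "Bd \<xi> * exp (- \<rho> * \<xi>) \<le> \<epsilon>" using Bdexp[of \<xi>] by linarith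
  qed
  show ?thesis unfolding rel_compact_E_def
  proof (intro conjI allI impI)
    show "Top d \<beta> c f ` ?A \<subseteq> Espace \<rho>"
    proof
      fix w assume "w \<in> Top d \<beta> c f ` ?A"
      then obtain u where u: "u \<in> ?A" and w: "w = Top d \<beta> c f u" by blast
      show "w \<in> Espace \<rho>" unfolding w
        by (rule espace_memb[where Bd=Bd and W=K and Lc=Lc, OF Bdu[OF u] BW Lip[OF u] Lc0])
    qed
    fix x :: "nat \<Rightarrow> real \<Rightarrow> real^('n::{finite,linorder})"
    assume "\<forall>n. x n \<in> Top d \<beta> c f ` ?A"
    then have "\<forall>n. \<exists>u. u \<in> ?A \<and> x n = Top d \<beta> c f u" by (auto simp: image_iff)
    then obtain U where U0: "\<forall>n. U n \<in> ?A \<and> x n = Top d \<beta> c f (U n)" using choice[of "\<lambda>n u. u \<in> ?A \<and> x n = Top d \<beta> c f u"] by blast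
    have U: "\<And>n. U n \<in> ?A" "\<And>n. x n = Top d \<beta> c f (U n)" using U0 by auto
    show "\<exists>r v. strict_mono r \<and> v \<in> Espace \<rho> \<and> (\<lambda>n. wnorm \<rho> (\<lambda>\<xi>. x (r n) \<xi> - v \<xi>)) \<longlonglongrightarrow> 0"
    proof (rule seq_compact_E[where Bd=Bd and K=K and W=K])
      show "\<rho> > 0" using \<rho>_range by simp
      show "\<bar>x n \<xi> $ i\<bar> \<le> Bd \<xi>" for n \<xi> i unfolding U(2) by (rule Bdu[OF U(1)])
      show "Bd \<xi> \<le> K" for \<xi> by (rule BK)
      show "Bd \<xi> * exp (- \<rho> * \<xi>) \<le> K" for \<xi> by (rule BW)
      show "\<exists>T. \<forall>\<xi>. T \<le> \<bar>\<xi>\<bar> \<longrightarrow> Bd \<xi> * exp (- \<rho> * \<xi>) \<le> \<epsilon>" if "\<epsilon> > 0" for \<epsilon> using tail that by blast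
      show "\<exists>\<delta>>0. \<forall>n \<xi> \<eta>. \<bar>\<xi> - \<eta>\<bar> < \<delta> \<longrightarrow> norm (x n \<xi> - x n \<eta>) < e" if e: "e > 0" for e
      proof (intro exI[of _ "e / (Lc + 1)"] conjI allI impI)
        show "e / (Lc + 1) > 0" using e Lc0 by simp
        fix n \<xi> \<eta> assume "\<bar>\<xi> - \<eta>\<bar> < e / (Lc + 1)"
        then have "\<bar>\<xi> - \<eta>\<bar> * (Lc + 1) < e" using Lc0 by (simp add: field_simps)
        moreover have "norm (x n \<xi> - x n \<eta>) \<le> Lc * \<bar>\<xi> - \<eta>\<bar>" unfolding U(2) by (rule Lip[OF U(1)])
        moreover have "Lc * \<bar>\<xi> - \<eta>\<bar> \<le> \<bar>\<xi> - \<eta>\<bar> * (Lc + 1)" by (simp add: algebra_simps)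
        ultimately show "norm (x n \<xi> - x n \<eta>) < e" by linarith
      qed
    qed
  qed
qed
end
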